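(* Let $G$ be a finite group and let $\phi=a_1\chi_1+\cdots+a_q\chi_q$ be a virtual character of $G$, where $a_i\in\mathbb{R}$ and $\chi_i$ are irreducible complex characters of $G$ with $n_i=\chi_i(1)$, $i=1,\dots,q$. Then for every $g\in G$, $$\mathbb{E}(\xi_{g,\phi})=\sum_{i=1}^q \frac{a_i}{n_i^2}\,\mathrm{Re}(\chi_i(g)).$$ If $\phi$ is non-negative, then for every $g\in G$, $$c(g)\;\le\;\frac{\mathbb{E}(\xi_{g,\phi})}{\phi(1)}\;=\;\frac{(a_1/n_1^2)\mathrm{Re}(\chi_1(g))+\cdots+(a_q/n_q^2)\mathrm{Re}(\chi_q(g))}{a_1n_1+\cdots+a_qn_q},$$ and in particular $$c(G)=c(1)\;\le\;\frac{a_1/n_1+\cdots+a_q/n_q}{a_1n_1+\cdots+a_qn_q}.$$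
   Context: $G$ is a finite group of order $m$; $G\times G$ carries the uniform probability measure (mass $1/m^2$ per point) and $\mathbb{E}$ denotes expectation with respect to it. For $g\in G$, $c(g)=|\{(x,y)\in G\times G:[x,y]=g\}|/|G\times G|$ and $c(G)=c(1)$. For a virtual character $\phi$ and $g\in G$, $\xi_{g,\phi}$ is the real random variable on $G\times G$ given by $\xi_{g,\phi}(a,b)=\mathrm{Re}\big(\phi([a,b]^{-1}g)\big)=\sum_i a_i\mathrm{Re}(\chi_i([a,b]^{-1}g))$. A virtual character $\phi=\sum_{\chi\in\mathrm{Irr}(G)}a_\chi\chi$ is called non-negative if (a) $\mathrm{Re}(\phi(h))\ge0$ for all $h\in G$, and (b) all coefficients $a_\chi$ are non-negative real numbers and at least one is non-zero. *)

theory Defs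
  imports "HOL-Algebra.Group" "Jordan_Normal_Form.Matrix"
begin

definition mat_tr :: "complex mat \<Rightarrow> complex" where
  "mat_tr A = (\<Sum>i<dim_row A. A $$ (i, i))"

definition complex_rep :: "('a, 'b) monoid_scheme \<Rightarrow> nat \<Rightarrow> ('a \<Rightarrow> complex mat) \<Rightarrow> bool" where
  "complex_rep G n \<rho> \<longleftrightarrow>
     (\<forall>g\<in>carrier G. \<rho> g \<in> carrier_mat n n) \<and>
     \<rho> \<one>\<^bsub>G\<^esub> = 1\<^sub>m n \<and>
     (\<forall>g\<in>carrier G. \<forall>h\<in>carrier G. \<rho> (g \<otimes>\<^bsub>G\<^esub> h) = \<rho> g * \<rho> h)"

definition subspace_vec :: "nat \<Rightarrow> complex vec set \<Rightarrow> bool" where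
  "subspace_vec n W \<longleftrightarrow> W \<subseteq> carrier_vec n \<and> 0\<^sub>v n \<in> W \<and>
     (\<forall>v\<in>W. \<forall>w\<in>W. v + w \<in> W) \<and> (\<forall>c. \<forall>v\<in>W. c \<cdot>\<^sub>v v \<in> W)"

definition irreducible_rep :: "('a, 'b) monoid_scheme \<Rightarrow> nat \<Rightarrow> ('a \<Rightarrow> complex mat) \<Rightarrow> bool" where
  "irreducible_rep G n \<rho> \<longleftrightarrow> complex_rep G n \<rho> \<and> n > 0 \<and>
     (\<forall>W. subspace_vec n W \<and> (\<forall>g\<in>carrier G. \<forall>w\<in>W. \<rho> g *\<^sub>v w \<in> W)
          \<longrightarrow> W = {0\<^sub>v n} \<or> W = carrier_vec n)"

definition irr_char :: "('a, 'b) monoid_scheme \<Rightarrow> ('a \<Rightarrow> complex) \<Rightarrow> bool" where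
  "irr_char G \<chi> \<longleftrightarrow> (\<exists>n \<rho>. irreducible_rep G n \<rho> \<and> (\<forall>g\<in>carrier G. \<chi> g = mat_tr (\<rho> g)))"

definition comm :: "('a, 'b) monoid_scheme \<Rightarrow> 'a \<Rightarrow> 'a \<Rightarrow> 'a" where
  "comm G x y = inv\<^bsub>G\<^esub> x \<otimes>\<^bsub>G\<^esub> inv\<^bsub>G\<^esub> y \<otimes>\<^bsub>G\<^esub> x \<otimes>\<^bsub>G\<^esub> y"

definition comm_prob :: "('a, 'b) monoid_scheme \<Rightarrow> 'a \<Rightarrow> real" where
  "comm_prob G g = real (card {(x, y). x \<in> carrier G \<and> y \<in> carrier G \<and> comm G x y = g})
                   / real (card (carrier G \<times> carrier G))"

definition expect_GG :: "('a, 'b) monoid_scheme \<Rightarrow> ('a \<times> 'a \<Rightarrow> real) \<Rightarrow> real" where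
  "expect_GG G f = (\<Sum>p\<in>carrier G \<times> carrier G. f p) / real (card (carrier G \<times> carrier G))"

definition virt_char :: "nat \<Rightarrow> (nat \<Rightarrow> real) \<Rightarrow> (nat \<Rightarrow> 'a \<Rightarrow> complex) \<Rightarrow> 'a \<Rightarrow> complex" where
  "virt_char q a \<chi> h = (\<Sum>i<q. complex_of_real (a i) * \<chi> i h)"

definition xi :: "('a, 'b) monoid_scheme \<Rightarrow> 'a \<Rightarrow> ('a \<Rightarrow> complex) \<Rightarrow> 'a \<times> 'a \<Rightarrow> real" where
  "xi G g \<phi> p = Re (\<phi> (inv\<^bsub>G\<^esub> (comm G (fst p) (snd p)) \<otimes>\<^bsub>G\<^esub> g))"

(* non-negative virtual character, relative to its decomposition into the
   (pairwise distinct) irreducible characters chi_0, ..., chi_{q-1} *)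
definition nonneg_virt_char :: "('a, 'b) monoid_scheme \<Rightarrow> nat \<Rightarrow> (nat \<Rightarrow> real) \<Rightarrow> (nat \<Rightarrow> 'a \<Rightarrow> complex) \<Rightarrow> bool" where
  "nonneg_virt_char G q a \<chi> \<longleftrightarrow>
     (\<forall>h\<in>carrier G. Re (virt_char q a \<chi> h) \<ge> 0) \<and>
     (\<forall>i<q. a i \<ge> 0) \<and> (\<exists>i<q. a i \<noteq> 0)"

end

theory Submission
  imports Defs "Jordan_Normal_Form.Spectral_Radius"
begin

lemma mult_entry:
  assumes "A \<in> carrier_mat n m" "B \<in> carrier_mat m p" "i < n" "j < p"
  shows "(A * B) $$ (i,j) = (\<Sum>k<m. A $$ (i,k) * B $$ (k,j))"
  using assms by (auto simp: scalar_prod_def atLeast0LessThan intro!: sum.cong)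

lemma sum_mult_delta: "finite A \<Longrightarrow> (\<Sum>k\<in>A. f k * (if k = j then 1 else 0)) = (if j \<in> A then f j else (0::'a::semiring_1))"
proof -
  assume "finite A"
  have "(\<Sum>k\<in>A. f k * (if k = j then 1 else 0)) = (\<Sum>k\<in>A. if k = j then f k else 0)"
    by (rule sum.cong) auto
  then show ?thesis using \<open>finite A\<close> by (simp add: sum.delta')
qed

lemma mat_assoc4a:
  "P \<in> carrier_mat n n \<Longrightarrow> A \<in> carrier_mat n n \<Longrightarrow> Q \<in> carrier_mat n n \<Longrightarrow> R \<in> carrier_mat n n
   \<Longrightarrow> P * A * Q * R = P * A * (Q * R)"
  by (simp add: assoc_mult_mat[of _ n n _ n _ n])

lemma mat_assoc4b:
  "P \<in> carrier_mat n n \<Longrightarrow> A \<in> carrier_mat n n \<Longrightarrow> Q \<in> carrier_mat n n \<Longrightarrow> R \<in> carrier_mat n n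
   \<Longrightarrow> P * Q * A * R = P * (Q * A * R)"
  by (simp add: assoc_mult_mat[of _ n n _ n _ n])

lemma sum_mult_delta2: "finite A \<Longrightarrow> (\<Sum>k\<in>A. f k * (if k = j then v else 0)) = (if j \<in> A then f j * v else (0::'a::semiring_1))"
proof -
  assume "finite A"
  have "(\<Sum>k\<in>A. f k * (if k = j then v else 0)) = (\<Sum>k\<in>A. if k = j then f k * v else 0)"
    by (rule sum.cong) auto
  then show ?thesis using \<open>finite A\<close> by (simp add: sum.delta')
qed

lemma emat_entry:
  fixes P Q :: "'a::comm_semiring_1 mat"
  assumes P: "P \<in> carrier_mat n n" and Q: "Q \<in> carrier_mat n n"
    and a: "a < n" and b: "b < n" and c: "c < n" and d: "d < n"
  shows "(P * mat n n (\<lambda>(i,j). if i = b \<and> j = c then 1 else 0) * Q) $$ (a,d) = P $$ (a,b) * Q $$ (c,d)"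
proof -
  define E :: "'a mat" where "E = mat n n (\<lambda>(i,j). if i = b \<and> j = c then 1 else 0)"
  have E: "E \<in> carrier_mat n n" by (simp add: E_def)
  have PE: "j < n \<Longrightarrow> (P * E) $$ (a,j) = P $$ (a,b) * (if j = c then 1 else 0)" for j
  proof -
    assume j: "j < n"
    have "(P * E) $$ (a,j) = (\<Sum>k<n. P $$ (a,k) * E $$ (k,j))" by (rule mult_entry[OF P E a j])
    also have "\<dots> = (\<Sum>k<n. P $$ (a,k) * (if k = b then (if j = c then 1 else 0) else 0))"
      using j by (auto simp: E_def intro!: sum.cong)
    also have "\<dots> = P $$ (a,b) * (if j = c then 1 else 0)"
      using b by (simp add: sum_mult_delta2)
    finally show ?thesis .
  qed
  have "(P * E * Q) $$ (a,d) = (\<Sum>j<n. (P * E) $$ (a,j) * Q $$ (j,d))"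
    by (rule mult_entry[OF mult_carrier_mat[OF P E] Q a d])
  also have "\<dots> = (\<Sum>j<n. P $$ (a,b) * (Q $$ (j,d) * (if j = c then 1 else 0)))"
    by (rule sum.cong) (auto simp: PE)
  also have "\<dots> = P $$ (a,b) * Q $$ (c,d)"
    using c by (simp add: sum_mult_delta sum_distrib_left[symmetric])
  finally show ?thesis unfolding E_def .
qed

lemma mat_tr_carrier: "A \<in> carrier_mat n n \<Longrightarrow> mat_tr A = (\<Sum>i<n. A $$ (i,i))"
  by (simp add: mat_tr_def)

lemma mat_tr_comm:
  assumes "A \<in> carrier_mat n m" "B \<in> carrier_mat m n"
  shows "mat_tr (A * B) = mat_tr (B * A)"
proof -
  have "mat_tr (A * B) = (\<Sum>i<n. \<Sum>k<m. A $$ (i,k) * B $$ (k,i))"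
    using assms by (auto simp: mat_tr_def scalar_prod_def atLeast0LessThan intro!: sum.cong)
  also have "\<dots> = (\<Sum>k<m. \<Sum>i<n. B $$ (k,i) * A $$ (i,k))"
    by (subst sum.swap) (simp add: mult.commute)
  also have "\<dots> = mat_tr (B * A)"
    using assms by (auto simp: mat_tr_def scalar_prod_def atLeast0LessThan intro!: sum.cong)
  finally show ?thesis .
qed

lemma mat_tr_one: "mat_tr (1\<^sub>m n) = of_nat n"
  by (simp add: mat_tr_def)

lemma mat_tr_smult_one: "mat_tr (c \<cdot>\<^sub>m 1\<^sub>m n) = c * of_nat n"
  by (simp add: mat_tr_def)

lemma schur:
  fixes G (structure)
  assumes irr: "irreducible_rep G n \<rho>"
    and T: "T \<in> carrier_mat n n"
    and comm: "\<forall>g\<in>carrier G. T * \<rho> g = \<rho> g * T"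
  shows "\<exists>c. T = c \<cdot>\<^sub>m 1\<^sub>m n"
proof -
  have n: "n > 0" and rep: "complex_rep G n \<rho>" using irr by (auto simp: irreducible_rep_def)
  have car: "\<And>g. g \<in> carrier G \<Longrightarrow> \<rho> g \<in> carrier_mat n n" using rep by (auto simp: complex_rep_def)
  obtain c where "c \<in> spectrum T" using spectrum_non_empty[OF T n] by auto
  then obtain v where v: "eigenvector T v c" by (auto simp: spectrum_def eigenvalue_def)
  hence v': "v \<in> carrier_vec n" "v \<noteq> 0\<^sub>v n" "T *\<^sub>v v = c \<cdot>\<^sub>v v" using T by (auto simp: eigenvector_def)
  define W where "W = {w \<in> carrier_vec n. T *\<^sub>v w = c \<cdot>\<^sub>v w}"
  have sub: "subspace_vec n W"
    unfolding subspace_vec_def W_def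
  proof (intro conjI ballI allI)
    show "{w \<in> carrier_vec n. T *\<^sub>v w = c \<cdot>\<^sub>v w} \<subseteq> carrier_vec n" by auto
    show "0\<^sub>v n \<in> {w \<in> carrier_vec n. T *\<^sub>v w = c \<cdot>\<^sub>v w}" using T by auto
  next
    fix x y assume "x \<in> {w \<in> carrier_vec n. T *\<^sub>v w = c \<cdot>\<^sub>v w}" "y \<in> {w \<in> carrier_vec n. T *\<^sub>v w = c \<cdot>\<^sub>v w}"
    then show "x + y \<in> {w \<in> carrier_vec n. T *\<^sub>v w = c \<cdot>\<^sub>v w}"
      using T by (auto simp: mult_add_distrib_mat_vec smult_add_distrib_vec)
  next
    fix d x assume "x \<in> {w \<in> carrier_vec n. T *\<^sub>v w = c \<cdot>\<^sub>v w}"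
    then show "d \<cdot>\<^sub>v x \<in> {w \<in> carrier_vec n. T *\<^sub>v w = c \<cdot>\<^sub>v w}"
      using T by (auto simp: mult_mat_vec smult_smult_assoc mult.commute)
  qed
  have inv: "\<forall>g\<in>carrier G. \<forall>w\<in>W. \<rho> g *\<^sub>v w \<in> W"
  proof (intro ballI)
    fix g w assume g: "g \<in> carrier G" and w: "w \<in> W"
    have "T *\<^sub>v (\<rho> g *\<^sub>v w) = (T * \<rho> g) *\<^sub>v w" using T car[OF g] w by (simp add: W_def)
    also have "\<dots> = (\<rho> g * T) *\<^sub>v w" using comm g by simp
    also have "\<dots> = \<rho> g *\<^sub>v (c \<cdot>\<^sub>v w)" using T car[OF g] w by (simp add: W_def)
    also have "\<dots> = c \<cdot>\<^sub>v (\<rho> g *\<^sub>v w)" using car[OF g] w by (simp add: W_def mult_mat_vec)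
    finally show "\<rho> g *\<^sub>v w \<in> W" using car[OF g] w by (simp add: W_def)
  qed
  have "W = {0\<^sub>v n} \<or> W = carrier_vec n" using irr sub inv by (auto simp: irreducible_rep_def)
  moreover have "v \<in> W" using v' by (simp add: W_def)
  ultimately have W: "W = carrier_vec n" using v' by auto
  show ?thesis
  proof (intro exI eq_matI)
    fix i j assume i: "i < dim_row (c \<cdot>\<^sub>m 1\<^sub>m n)" and j: "j < dim_col (c \<cdot>\<^sub>m 1\<^sub>m n)"
    have "unit_vec n j \<in> W" using W j by simp
    hence "T *\<^sub>v unit_vec n j = c \<cdot>\<^sub>v unit_vec n j" by (simp add: W_def)
    hence "(T *\<^sub>v unit_vec n j) $ i = (c \<cdot>\<^sub>v unit_vec n j) $ i" by simp
    moreover have "(T *\<^sub>v unit_vec n j) $ i = T $$ (i,j)"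
      using T i j by (simp add: scalar_prod_def sum_mult_delta)
    ultimately show "T $$ (i,j) = (c \<cdot>\<^sub>m 1\<^sub>m n) $$ (i,j)" using i j by simp
  qed (use T in auto)
qed

context
  fixes G (structure) and n :: nat and \<rho> :: "'a \<Rightarrow> complex mat"
  assumes grp: "group G" and fin: "finite (carrier G)" and irr: "irreducible_rep G n \<rho>"
begin

lemma npos: "n > 0" using irr by (simp add: irreducible_rep_def)

lemma rcar: "g \<in> carrier G \<Longrightarrow> \<rho> g \<in> carrier_mat n n"
  using irr by (simp add: irreducible_rep_def complex_rep_def)

lemma rmult: "g \<in> carrier G \<Longrightarrow> h \<in> carrier G \<Longrightarrow> \<rho> (g \<otimes> h) = \<rho> g * \<rho> h"
  using irr by (simp add: irreducible_rep_def complex_rep_def)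

lemma rone: "\<rho> \<one> = 1\<^sub>m n"
  using irr by (simp add: irreducible_rep_def complex_rep_def)

lemma rinv: "x \<in> carrier G \<Longrightarrow> \<rho> x * \<rho> (inv x) = 1\<^sub>m n"
  using rmult[of x "inv x"] rone grp by (simp add: group.r_inv group.inv_closed)

lemma rinv': "x \<in> carrier G \<Longrightarrow> \<rho> (inv x) * \<rho> x = 1\<^sub>m n"
  using rmult[of "inv x" x] rone grp by (simp add: group.l_inv group.inv_closed)

definition avg :: "complex mat \<Rightarrow> complex mat" where
  "avg A = mat n n (\<lambda>(a,d). \<Sum>x\<in>carrier G. (\<rho> (inv x) * A * \<rho> x) $$ (a,d))"

lemma avg_car: "avg A \<in> carrier_mat n n" by (simp add: avg_def)

lemma avg_comm:
  assumes A: "A \<in> carrier_mat n n" and g: "g \<in> carrier G"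
  shows "avg A * \<rho> g = \<rho> g * avg A"
proof (rule eq_matI)
  fix a d assume a: "a < dim_row (\<rho> g * avg A)" and d: "d < dim_col (\<rho> g * avg A)"
  hence a: "a < n" and d: "d < n" using rcar[OF g] by (auto simp: avg_def)
  define M where "M x = \<rho> (inv x) * A * \<rho> x" for x
  have Mc: "x \<in> carrier G \<Longrightarrow> M x \<in> carrier_mat n n" for x
    unfolding M_def by (intro mult_carrier_mat[of _ n n] rcar A) (use grp in \<open>auto simp: group.inv_closed\<close>)
  have "(avg A * \<rho> g) $$ (a,d) = (\<Sum>k<n. avg A $$ (a,k) * \<rho> g $$ (k,d))"
    by (rule mult_entry[OF avg_car rcar[OF g] a d])
  also have "\<dots> = (\<Sum>k<n. \<Sum>x\<in>carrier G. M x $$ (a,k) * \<rho> g $$ (k,d))"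
    using a by (auto simp: avg_def M_def sum_distrib_right intro!: sum.cong)
  also have "\<dots> = (\<Sum>x\<in>carrier G. \<Sum>k<n. M x $$ (a,k) * \<rho> g $$ (k,d))"
    by (rule sum.swap)
  also have "\<dots> = (\<Sum>x\<in>carrier G. (M x * \<rho> g) $$ (a,d))"
    by (rule sum.cong[OF refl], rule mult_entry[symmetric, OF Mc rcar[OF g] a d])
  also have "\<dots> = (\<Sum>x\<in>carrier G. (\<rho> (g \<otimes> inv (x \<otimes> g)) * A * \<rho> (x \<otimes> g)) $$ (a,d))"
  proof (rule sum.cong[OF refl])
    fix x assume x: "x \<in> carrier G"
    have "g \<otimes> inv (x \<otimes> g) = inv x" using grp x g
      by (simp add: group.inv_mult_group group.inv_closed monoid.m_assoc[symmetric] group.is_monoid group.r_inv)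
    then show "(M x * \<rho> g) $$ (a,d) = (\<rho> (g \<otimes> inv (x \<otimes> g)) * A * \<rho> (x \<otimes> g)) $$ (a,d)"
      using x g A grp rcar by (simp add: M_def rmult group.inv_closed mat_assoc4a[of _ n])
  qed
  also have "\<dots> = (\<Sum>y\<in>carrier G. (\<rho> (g \<otimes> inv y) * A * \<rho> y) $$ (a,d))"
    by (rule sum.reindex_bij_witness[of _ "\<lambda>y. y \<otimes> inv g" "\<lambda>x. x \<otimes> g"])
       (use grp g in \<open>auto simp: group.inv_closed monoid.m_assoc group.is_monoid group.r_inv group.l_inv monoid.m_closed\<close>)
  also have "\<dots> = (\<Sum>x\<in>carrier G. (\<rho> g * M x) $$ (a,d))"
  proof (rule sum.cong[OF refl])
    fix x assume x: "x \<in> carrier G"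
    show "(\<rho> (g \<otimes> inv x) * A * \<rho> x) $$ (a,d) = (\<rho> g * M x) $$ (a,d)"
      using x g A grp rcar by (simp add: M_def rmult group.inv_closed mat_assoc4b[of _ n])
  qed
  also have "\<dots> = (\<Sum>x\<in>carrier G. \<Sum>k<n. \<rho> g $$ (a,k) * M x $$ (k,d))"
    by (rule sum.cong[OF refl], rule mult_entry[OF rcar[OF g] Mc a d])
  also have "\<dots> = (\<Sum>k<n. \<Sum>x\<in>carrier G. \<rho> g $$ (a,k) * M x $$ (k,d))"
    by (rule sum.swap)
  also have "\<dots> = (\<Sum>k<n. \<rho> g $$ (a,k) * avg A $$ (k,d))"
    using d by (auto simp: avg_def M_def sum_distrib_left intro!: sum.cong)
  also have "\<dots> = (\<rho> g * avg A) $$ (a,d)"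
    by (rule mult_entry[OF rcar[OF g] avg_car a d, symmetric])
  finally show "(avg A * \<rho> g) $$ (a,d) = (\<rho> g * avg A) $$ (a,d)" .
qed (use rcar[OF g] in \<open>auto simp: avg_def\<close>)

lemma avg_scalar:
  assumes A: "A \<in> carrier_mat n n"
  shows "avg A = (of_nat (card (carrier G)) * mat_tr A / of_nat n) \<cdot>\<^sub>m 1\<^sub>m n"
proof -
  obtain c where c: "avg A = c \<cdot>\<^sub>m 1\<^sub>m n"
    using schur[OF irr avg_car] avg_comm[OF A] by blast
  have Mt: "mat_tr (\<rho> (inv x) * A * \<rho> x) = mat_tr A" if x: "x \<in> carrier G" for x
  proof -
    have ix: "inv x \<in> carrier G" using grp x by (simp add: group.inv_closed)
    have "mat_tr (\<rho> (inv x) * A * \<rho> x) = mat_tr (\<rho> (inv x) * (A * \<rho> x))"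
      using rcar[OF ix] rcar[OF x] A by (simp add: assoc_mult_mat[of _ n n _ n _ n])
    also have "\<dots> = mat_tr ((A * \<rho> x) * \<rho> (inv x))"
      by (rule mat_tr_comm[OF rcar[OF ix] mult_carrier_mat[OF A rcar[OF x]]])
    also have "\<dots> = mat_tr (A * (\<rho> x * \<rho> (inv x)))"
      using rcar[OF ix] rcar[OF x] A by (simp add: assoc_mult_mat[of _ n n _ n _ n])
    also have "\<dots> = mat_tr A" using rinv[OF x] A by simp
    finally show ?thesis .
  qed
  have "mat_tr (avg A) = (\<Sum>a<n. \<Sum>x\<in>carrier G. (\<rho> (inv x) * A * \<rho> x) $$ (a,a))"
    by (simp add: avg_def mat_tr_def)
  also have "\<dots> = (\<Sum>x\<in>carrier G. \<Sum>a<n. (\<rho> (inv x) * A * \<rho> x) $$ (a,a))"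
    by (rule sum.swap)
  also have "\<dots> = (\<Sum>x\<in>carrier G. mat_tr A)"
  proof (rule sum.cong[OF refl])
    fix x assume x: "x \<in> carrier G"
    have ix: "inv x \<in> carrier G" using grp x by (simp add: group.inv_closed)
    have "\<rho> (inv x) * A * \<rho> x \<in> carrier_mat n n"
      by (intro mult_carrier_mat[of _ n n] rcar A x ix)
    then show "(\<Sum>a<n. (\<rho> (inv x) * A * \<rho> x) $$ (a,a)) = mat_tr A"
      using Mt[OF x] A rcar[OF ix] by (simp add: mat_tr_def carrier_matD)
  qed
  finally have "mat_tr (avg A) = of_nat (card (carrier G)) * mat_tr A" by simp
  moreover have "mat_tr (avg A) = c * of_nat n" using c mat_tr_smult_one by simp
  ultimately have "c = of_nat (card (carrier G)) * mat_tr A / of_nat n" using npos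
    by (simp add: field_simps)
  then show ?thesis using c by simp
qed

lemma L2:
  assumes B: "B \<in> carrier_mat n n" and C: "C \<in> carrier_mat n n"
  shows "(\<Sum>x\<in>carrier G. mat_tr (\<rho> (inv x) * B * \<rho> x * C))
       = of_nat (card (carrier G)) / of_nat n * mat_tr B * mat_tr C"
proof -
  define M where "M x = \<rho> (inv x) * B * \<rho> x" for x
  have Mc: "x \<in> carrier G \<Longrightarrow> M x \<in> carrier_mat n n" for x
    unfolding M_def by (intro mult_carrier_mat[of _ n n] rcar B) (use grp in \<open>auto simp: group.inv_closed\<close>)
  define k where "k = of_nat (card (carrier G)) * mat_tr B / of_nat n"
  have avgB: "a < n \<Longrightarrow> d < n \<Longrightarrow> (\<Sum>x\<in>carrier G. M x $$ (a,d)) = (if a = d then k else 0)" for a d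
  proof -
    assume a: "a < n" and d: "d < n"
    have "(\<Sum>x\<in>carrier G. M x $$ (a,d)) = avg B $$ (a,d)" using a d by (simp add: avg_def M_def)
    also have "\<dots> = (if a = d then k else 0)" using avg_scalar[OF B] a d by (simp add: k_def)
    finally show ?thesis .
  qed
  have "(\<Sum>x\<in>carrier G. mat_tr (M x * C)) = (\<Sum>x\<in>carrier G. \<Sum>a<n. \<Sum>d<n. M x $$ (a,d) * C $$ (d,a))"
  proof (rule sum.cong[OF refl])
    fix x assume x: "x \<in> carrier G"
    show "mat_tr (M x * C) = (\<Sum>a<n. \<Sum>d<n. M x $$ (a,d) * C $$ (d,a))"
      unfolding mat_tr_carrier[OF mult_carrier_mat[OF Mc[OF x] C]]
      by (rule sum.cong[OF refl], rule mult_entry[OF Mc[OF x] C]) auto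
  qed
  also have "\<dots> = (\<Sum>a<n. \<Sum>d<n. (\<Sum>x\<in>carrier G. M x $$ (a,d)) * C $$ (d,a))"
    by (simp add: sum_distrib_right sum.swap[of _ "carrier G"])
  also have "\<dots> = (\<Sum>a<n. \<Sum>d<n. C $$ (d,a) * (if d = a then k else 0))"
    by (auto simp: avgB mult.commute intro!: sum.cong)
  also have "\<dots> = (\<Sum>a<n. k * C $$ (a,a))"
    by (rule sum.cong[OF refl]) (simp add: sum_mult_delta2)
  also have "\<dots> = k * mat_tr C" using C by (simp add: mat_tr_carrier sum_distrib_left)
  finally show ?thesis by (simp add: M_def k_def)
qed

lemma L1:
  assumes a: "a < n" and b: "b < n" and c: "c < n" and d: "d < n"
  shows "(\<Sum>x\<in>carrier G. \<rho> (inv x) $$ (a,b) * \<rho> x $$ (c,d))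
       = (if a = d \<and> b = c then of_nat (card (carrier G)) / of_nat n else 0)"
proof -
  define E :: "complex mat" where "E = mat n n (\<lambda>(i,j). if i = b \<and> j = c then 1 else 0)"
  have E: "E \<in> carrier_mat n n" by (simp add: E_def)
  have trE: "mat_tr E = (if b = c then 1 else 0)"
  proof -
    have "mat_tr E = (\<Sum>i<n. if i = b then (if b = c then 1 else 0) else 0)"
      unfolding mat_tr_def E_def by (rule sum.cong) auto
    then show ?thesis using b by simp
  qed
  have "(\<Sum>x\<in>carrier G. \<rho> (inv x) $$ (a,b) * \<rho> x $$ (c,d)) = (\<Sum>x\<in>carrier G. (\<rho> (inv x) * E * \<rho> x) $$ (a,d))"
  proof (rule sum.cong[OF refl])
    fix x assume x: "x \<in> carrier G"
    have ix: "inv x \<in> carrier G" using grp x by (simp add: group.inv_closed)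
    show "\<rho> (inv x) $$ (a,b) * \<rho> x $$ (c,d) = (\<rho> (inv x) * E * \<rho> x) $$ (a,d)"
      unfolding E_def by (rule emat_entry[OF rcar[OF ix] rcar[OF x] a b c d, symmetric])
  qed
  also have "\<dots> = avg E $$ (a,d)" using a d by (simp add: avg_def)
  also have "\<dots> = (if a = d \<and> b = c then of_nat (card (carrier G)) / of_nat n else 0)"
    using avg_scalar[OF E] a d trE by simp
  finally show ?thesis .
qed

lemma step1:
  assumes x: "x \<in> carrier G" and y: "y \<in> carrier G" and g: "g \<in> carrier G"
  shows "mat_tr (\<rho> (inv (comm G x y) \<otimes> g)) = mat_tr (\<rho> (inv x) * \<rho> y * \<rho> x * \<rho> (g \<otimes> inv y))"
proof -
  interpret group G by (rule grp)
  define u where "u = inv x \<otimes> y \<otimes> x \<otimes> g"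
  have u: "u \<in> carrier G" using x y g by (simp add: u_def)
  have "inv (comm G x y) \<otimes> g = inv y \<otimes> u"
    using x y g by (simp add: u_def comm_def inv_mult_group m_assoc)
  hence "mat_tr (\<rho> (inv (comm G x y) \<otimes> g)) = mat_tr (\<rho> (inv y) * \<rho> u)"
    using y u by (simp add: rmult)
  also have "\<dots> = mat_tr (\<rho> u * \<rho> (inv y))"
    by (rule mat_tr_comm[OF rcar rcar]) (use y u in auto)
  also have "\<dots> = mat_tr (\<rho> (u \<otimes> inv y))" using y u by (simp add: rmult)
  also have "u \<otimes> inv y = inv x \<otimes> y \<otimes> x \<otimes> (g \<otimes> inv y)"
    using x y g by (simp add: u_def m_assoc)
  also have "\<rho> \<dots> = \<rho> (inv x) * \<rho> y * \<rho> x * \<rho> (g \<otimes> inv y)"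
    using x y g by (simp add: rmult)
  finally show ?thesis .
qed

lemma step2:
  assumes g: "g \<in> carrier G"
  shows "(\<Sum>y\<in>carrier G. mat_tr (\<rho> y) * mat_tr (\<rho> (g \<otimes> inv y)))
       = of_nat (card (carrier G)) / of_nat n * mat_tr (\<rho> g)"
proof -
  interpret group G by (rule grp)
  define k :: complex where "k = of_nat (card (carrier G)) / of_nat n"
  have "(\<Sum>y\<in>carrier G. mat_tr (\<rho> y) * mat_tr (\<rho> (g \<otimes> inv y)))
     = (\<Sum>y\<in>carrier G. \<Sum>i<n. \<Sum>j<n. \<Sum>l<n. \<rho> g $$ (j,l) * (\<rho> (inv y) $$ (l,j) * \<rho> y $$ (i,i)))"
  proof (rule sum.cong[OF refl])
    fix y assume y: "y \<in> carrier G"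
    have iy: "inv y \<in> carrier G" using y by simp
    have A: "mat_tr (\<rho> (g \<otimes> inv y)) = (\<Sum>j<n. \<Sum>l<n. \<rho> g $$ (j,l) * \<rho> (inv y) $$ (l,j))"
      using rmult[OF g iy] mat_tr_carrier[OF mult_carrier_mat[OF rcar[OF g] rcar[OF iy]]]
      by (simp add: mult_entry[OF rcar[OF g] rcar[OF iy]])
    have B: "mat_tr (\<rho> y) = (\<Sum>i<n. \<rho> y $$ (i,i))" by (rule mat_tr_carrier[OF rcar[OF y]])
    show "mat_tr (\<rho> y) * mat_tr (\<rho> (g \<otimes> inv y))
      = (\<Sum>i<n. \<Sum>j<n. \<Sum>l<n. \<rho> g $$ (j,l) * (\<rho> (inv y) $$ (l,j) * \<rho> y $$ (i,i)))"
    proof -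
      have "mat_tr (\<rho> y) * mat_tr (\<rho> (g \<otimes> inv y)) = (\<Sum>i<n. \<rho> y $$ (i,i) * (\<Sum>j<n. \<Sum>l<n. \<rho> g $$ (j,l) * \<rho> (inv y) $$ (l,j)))"
        unfolding A B by (rule sum_distrib_right)
      also have "\<dots> = (\<Sum>i<n. \<Sum>j<n. \<Sum>l<n. \<rho> g $$ (j,l) * (\<rho> (inv y) $$ (l,j) * \<rho> y $$ (i,i)))"
        by (intro sum.cong refl) (simp add: sum_distrib_left mult_ac)
      finally show ?thesis .
    qed
  qed
  also have "\<dots> = (\<Sum>i<n. \<Sum>j<n. \<Sum>l<n. \<rho> g $$ (j,l) * (\<Sum>y\<in>carrier G. \<rho> (inv y) $$ (l,j) * \<rho> y $$ (i,i)))"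
    by (simp add: sum_distrib_left sum.swap[of _ "carrier G"])
  also have "\<dots> = (\<Sum>i<n. \<Sum>j<n. \<Sum>l<n. \<rho> g $$ (j,l) * (if l = i then (if j = i then k else 0) else 0))"
    by (intro sum.cong refl) (simp add: L1 k_def)
  also have "\<dots> = (\<Sum>i<n. \<Sum>j<n. \<rho> g $$ (j,i) * (if j = i then k else 0))"
    by (intro sum.cong refl) (simp add: sum_mult_delta2)
  also have "\<dots> = (\<Sum>i<n. \<rho> g $$ (i,i) * k)"
    by (intro sum.cong refl) (simp add: sum_mult_delta2)
  also have "\<dots> = k * mat_tr (\<rho> g)"
    by (simp add: mat_tr_carrier[OF rcar[OF g]] sum_distrib_left mult.commute)
  finally show ?thesis by (simp add: k_def)
qed

lemma char_sum:
  assumes g: "g \<in> carrier G"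
  shows "(\<Sum>p\<in>carrier G \<times> carrier G. mat_tr (\<rho> (inv (comm G (fst p) (snd p)) \<otimes> g)))
       = (of_nat (card (carrier G)) / of_nat n)^2 * mat_tr (\<rho> g)"
proof -
  interpret group G by (rule grp)
  define k :: complex where "k = of_nat (card (carrier G)) / of_nat n"
  have "(\<Sum>p\<in>carrier G \<times> carrier G. mat_tr (\<rho> (inv (comm G (fst p) (snd p)) \<otimes> g)))
      = (\<Sum>x\<in>carrier G. \<Sum>y\<in>carrier G. mat_tr (\<rho> (inv (comm G x y) \<otimes> g)))"
    by (simp add: sum.cartesian_product split_def)
  also have "\<dots> = (\<Sum>y\<in>carrier G. \<Sum>x\<in>carrier G. mat_tr (\<rho> (inv (comm G x y) \<otimes> g)))"
    by (rule sum.swap)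
  also have "\<dots> = (\<Sum>y\<in>carrier G. \<Sum>x\<in>carrier G. mat_tr (\<rho> (inv x) * \<rho> y * \<rho> x * \<rho> (g \<otimes> inv y)))"
    by (intro sum.cong refl step1 g) auto
  also have "\<dots> = (\<Sum>y\<in>carrier G. k * mat_tr (\<rho> y) * mat_tr (\<rho> (g \<otimes> inv y)))"
    by (intro sum.cong refl) (simp add: L2 rcar g k_def)
  also have "\<dots> = k * (\<Sum>y\<in>carrier G. mat_tr (\<rho> y) * mat_tr (\<rho> (g \<otimes> inv y)))"
    by (simp add: sum_distrib_left mult.assoc)
  also have "\<dots> = k^2 * mat_tr (\<rho> g)"
    using step2[OF g] by (simp add: k_def power2_eq_square)
  finally show ?thesis by (simp add: k_def)
qed

end


theorem theorem1:
  fixes G :: "('a, 'b) monoid_scheme"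
    and q :: nat and a :: "nat \<Rightarrow> real" and \<chi> :: "nat \<Rightarrow> 'a \<Rightarrow> complex"
  assumes "group G" and "finite (carrier G)"
    and irr: "\<forall>i<q. irr_char G (\<chi> i)"
    and dist: "\<forall>i<q. \<forall>j<q. i \<noteq> j \<longrightarrow> restrict (\<chi> i) (carrier G) \<noteq> restrict (\<chi> j) (carrier G)"
  shows "(\<forall>g\<in>carrier G.
            expect_GG G (xi G g (virt_char q a \<chi>))
              = (\<Sum>i<q. a i / (Re (\<chi> i \<one>\<^bsub>G\<^esub>))\<^sup>2 * Re (\<chi> i g)))
       \<and> (nonneg_virt_char G q a \<chi> \<longrightarrow>
            (\<forall>g\<in>carrier G.
               comm_prob G g \<le> expect_GG G (xi G g (virt_char q a \<chi>)) / Re (virt_char q a \<chi> \<one>\<^bsub>G\<^esub>)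
             \<and> expect_GG G (xi G g (virt_char q a \<chi>)) / Re (virt_char q a \<chi> \<one>\<^bsub>G\<^esub>)
                 = (\<Sum>i<q. a i / (Re (\<chi> i \<one>\<^bsub>G\<^esub>))\<^sup>2 * Re (\<chi> i g))
                   / (\<Sum>i<q. a i * Re (\<chi> i \<one>\<^bsub>G\<^esub>)))
          \<and> comm_prob G \<one>\<^bsub>G\<^esub> \<le> (\<Sum>i<q. a i / Re (\<chi> i \<one>\<^bsub>G\<^esub>)) / (\<Sum>i<q. a i * Re (\<chi> i \<one>\<^bsub>G\<^esub>)))"
proof -
  interpret group G by (rule assms(1))
  note fin = assms(2)
  have "\<forall>i. \<exists>p. i < q \<longrightarrow> irreducible_rep G (fst p) (snd p) \<and> (\<forall>h\<in>carrier G. \<chi> i h = mat_tr (snd p h))"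
  proof
    fix i show "\<exists>p. i < q \<longrightarrow> irreducible_rep G (fst p) (snd p) \<and> (\<forall>h\<in>carrier G. \<chi> i h = mat_tr (snd p h))"
    proof (cases "i < q")
      case True
      then obtain n \<rho> where "irreducible_rep G n \<rho> \<and> (\<forall>h\<in>carrier G. \<chi> i h = mat_tr (\<rho> h))"
        using irr True unfolding irr_char_def by blast
      then show ?thesis by (intro exI[of _ "(n, \<rho>)"]) simp
    qed simp
  qed
  then obtain f where f: "\<And>i. i < q \<Longrightarrow> irreducible_rep G (fst (f i)) (snd (f i)) \<and> (\<forall>h\<in>carrier G. \<chi> i h = mat_tr (snd (f i) h))"
    by metis
  define N where "N i = fst (f i)" for i
  define R where "R i = snd (f i)" for i
  have NR: "\<And>i. i < q \<Longrightarrow> irreducible_rep G (N i) (R i) \<and> (\<forall>h\<in>carrier G. \<chi> i h = mat_tr (R i h))"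
    using f by (simp add: N_def R_def)
  define m where "m = card (carrier G)"
  have grp: "group G" by (rule assms(1))
  have chi1: "\<chi> i \<one>\<^bsub>G\<^esub> = of_nat (N i)" if i: "i < q" for i
    using NR[OF i] rone[OF grp fin, of "N i" "R i"] by (simp add: mat_tr_one)
  have Npos: "N i > 0" if i: "i < q" for i using NR[OF i] npos[OF grp fin] by blast
  have Rechi1: "Re (\<chi> i \<one>\<^bsub>G\<^esub>) = real (N i)" if i: "i < q" for i using chi1[OF i] by simp
  have csum: "(\<Sum>p\<in>carrier G \<times> carrier G. \<chi> i (inv\<^bsub>G\<^esub> (comm G (fst p) (snd p)) \<otimes>\<^bsub>G\<^esub> g))
      = (of_nat m / of_nat (N i))^2 * \<chi> i g" if i: "i < q" and g: "g \<in> carrier G" for i g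
  proof -
    have "(\<Sum>p\<in>carrier G \<times> carrier G. \<chi> i (inv\<^bsub>G\<^esub> (comm G (fst p) (snd p)) \<otimes>\<^bsub>G\<^esub> g))
        = (\<Sum>p\<in>carrier G \<times> carrier G. mat_tr (R i (inv\<^bsub>G\<^esub> (comm G (fst p) (snd p)) \<otimes>\<^bsub>G\<^esub> g)))"
      using NR[OF i] g by (intro sum.cong refl) (auto simp: comm_def)
    also have "\<dots> = (of_nat m / of_nat (N i))^2 * mat_tr (R i g)"
      unfolding m_def by (rule char_sum[OF grp fin _ g]) (use NR[OF i] in blast)
    finally show ?thesis using NR[OF i] g by simp
  qed
  have cardGG: "real (card (carrier G \<times> carrier G)) = real m ^ 2"
    by (simp add: card_cartesian_product m_def power2_eq_square)
  have mpos: "real m > 0" using fin one_closed unfolding m_def by (auto simp: card_gt_0_iff)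
  define S where "S g = (\<Sum>i<q. a i / (Re (\<chi> i \<one>\<^bsub>G\<^esub>))\<^sup>2 * Re (\<chi> i g))" for g
  have sumGG: "(\<Sum>p\<in>carrier G \<times> carrier G. xi G g (virt_char q a \<chi>) p)
      = (\<Sum>i<q. a i * Re (\<Sum>p\<in>carrier G \<times> carrier G. \<chi> i (inv\<^bsub>G\<^esub> (comm G (fst p) (snd p)) \<otimes>\<^bsub>G\<^esub> g)))" for g
  proof -
    have "(\<Sum>p\<in>carrier G \<times> carrier G. xi G g (virt_char q a \<chi>) p)
        = (\<Sum>p\<in>carrier G \<times> carrier G. \<Sum>i<q. a i * Re (\<chi> i (inv\<^bsub>G\<^esub> (comm G (fst p) (snd p)) \<otimes>\<^bsub>G\<^esub> g)))"
      unfolding xi_def virt_char_def by (intro sum.cong refl) (simp add: Re_sum)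
    also have "\<dots> = (\<Sum>i<q. \<Sum>p\<in>carrier G \<times> carrier G. a i * Re (\<chi> i (inv\<^bsub>G\<^esub> (comm G (fst p) (snd p)) \<otimes>\<^bsub>G\<^esub> g)))"
      by (rule sum.swap)
    also have "\<dots> = (\<Sum>i<q. a i * Re (\<Sum>p\<in>carrier G \<times> carrier G. \<chi> i (inv\<^bsub>G\<^esub> (comm G (fst p) (snd p)) \<otimes>\<^bsub>G\<^esub> g)))"
      by (intro sum.cong refl) (simp add: Re_sum sum_distrib_left)
    finally show ?thesis .
  qed
  have part1: "expect_GG G (xi G g (virt_char q a \<chi>)) = S g" if g: "g \<in> carrier G" for g
  proof -
    have "expect_GG G (xi G g (virt_char q a \<chi>))
        = (\<Sum>i<q. a i * Re ((of_nat m / of_nat (N i))^2 * \<chi> i g)) / real m ^ 2"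
      unfolding expect_GG_def sumGG cardGG using csum g by simp
    also have "\<dots> = (\<Sum>i<q. a i * ((real m / real (N i))^2 * Re (\<chi> i g))) / real m ^ 2"
    proof -
      have "Re ((of_nat m / of_nat k)^2 * z) = (real m / real k)^2 * Re z" for k :: nat and z :: complex
      proof -
        have "(of_nat m / of_nat k)^2 = (complex_of_real ((real m / real k)^2))" by simp
        then show ?thesis by simp
      qed
      then show ?thesis by simp
    qed
    also have "\<dots> = S g"
      unfolding S_def sum_divide_distrib
      using mpos Npos Rechi1 by (intro sum.cong refl) (simp add: field_simps)
    finally show ?thesis .
  qed
  show ?thesis
  proof (rule conjI[OF _ impI])
    show "\<forall>g\<in>carrier G. expect_GG G (xi G g (virt_char q a \<chi>)) = (\<Sum>i<q. a i / (Re (\<chi> i \<one>\<^bsub>G\<^esub>))\<^sup>2 * Re (\<chi> i g))"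
      using part1 by (simp add: S_def)
  next
    assume nn: "nonneg_virt_char G q a \<chi>"
    have phi1: "Re (virt_char q a \<chi> \<one>\<^bsub>G\<^esub>) = (\<Sum>i<q. a i * Re (\<chi> i \<one>\<^bsub>G\<^esub>))"
      by (simp add: virt_char_def Re_sum)
    have phipos: "Re (virt_char q a \<chi> \<one>\<^bsub>G\<^esub>) > 0"
    proof -
      obtain i0 where i0: "i0 < q" "a i0 \<noteq> 0" using nn by (auto simp: nonneg_virt_char_def)
      have nonneg: "\<forall>i\<in>{..<q}. 0 \<le> a i * Re (\<chi> i \<one>\<^bsub>G\<^esub>)"
      proof
        fix i assume i: "i \<in> {..<q}"
        then have "a i \<ge> 0" using nn unfolding nonneg_virt_char_def by blast
        then show "0 \<le> a i * Re (\<chi> i \<one>\<^bsub>G\<^esub>)" using Rechi1[of i] i by simp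
      qed
      have "a i0 \<ge> 0" using nn i0 unfolding nonneg_virt_char_def by blast
      then have "a i0 > 0" using i0 by simp
      then have "0 < a i0 * Re (\<chi> i0 \<one>\<^bsub>G\<^esub>)" using Rechi1[OF i0(1)] Npos[OF i0(1)] by simp
      also have "\<dots> \<le> (\<Sum>i<q. a i * Re (\<chi> i \<one>\<^bsub>G\<^esub>))"
        by (rule member_le_sum) (use i0 nonneg in auto)
      finally show ?thesis using phi1 by simp
    qed
    have ineq: "comm_prob G g \<le> expect_GG G (xi G g (virt_char q a \<chi>)) / Re (virt_char q a \<chi> \<one>\<^bsub>G\<^esub>)"
      if g: "g \<in> carrier G" for g
    proof -
      define C where "C = {(x, y). x \<in> carrier G \<and> y \<in> carrier G \<and> comm G x y = g}"
      have CG: "C \<subseteq> carrier G \<times> carrier G" by (auto simp: C_def)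
      have finGG: "finite (carrier G \<times> carrier G)" using fin by simp
      have "real (card C) * Re (virt_char q a \<chi> \<one>\<^bsub>G\<^esub>) = (\<Sum>p\<in>C. xi G g (virt_char q a \<chi>) p)"
      proof -
        have "(\<Sum>p\<in>C. xi G g (virt_char q a \<chi>) p) = (\<Sum>p\<in>C. Re (virt_char q a \<chi> \<one>\<^bsub>G\<^esub>))"
        proof (rule sum.cong[OF refl])
          fix p assume "p \<in> C"
          then obtain x y where p: "p = (x,y)" "x \<in> carrier G" "y \<in> carrier G" "comm G x y = g"
            by (auto simp: C_def)
          then show "xi G g (virt_char q a \<chi>) p = Re (virt_char q a \<chi> \<one>\<^bsub>G\<^esub>)"
            using g by (simp add: xi_def)
        qed
        then show ?thesis by simp
      qed
      also have "\<dots> \<le> (\<Sum>p\<in>carrier G \<times> carrier G. xi G g (virt_char q a \<chi>) p)"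
      proof (rule sum_mono2[OF finGG CG])
        fix p assume "p \<in> carrier G \<times> carrier G - C"
        then have "inv\<^bsub>G\<^esub> (comm G (fst p) (snd p)) \<otimes>\<^bsub>G\<^esub> g \<in> carrier G" using g
          by (auto simp: comm_def)
        then show "0 \<le> xi G g (virt_char q a \<chi>) p"
          using nn by (simp add: xi_def nonneg_virt_char_def)
      qed
      finally have le: "real (card C) * Re (virt_char q a \<chi> \<one>\<^bsub>G\<^esub>) \<le> (\<Sum>p\<in>carrier G \<times> carrier G. xi G g (virt_char q a \<chi>) p)" .
      have "comm_prob G g = real (card C) / real m ^ 2"
        unfolding comm_prob_def C_def[symmetric] cardGG ..
      also have "\<dots> \<le> expect_GG G (xi G g (virt_char q a \<chi>)) / Re (virt_char q a \<chi> \<one>\<^bsub>G\<^esub>)"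
        unfolding expect_GG_def cardGG using le phipos mpos
        by (simp add: field_simps)
      finally show ?thesis .
    qed
    have A: "\<forall>g\<in>carrier G.
       comm_prob G g \<le> expect_GG G (xi G g (virt_char q a \<chi>)) / Re (virt_char q a \<chi> \<one>\<^bsub>G\<^esub>) \<and>
       expect_GG G (xi G g (virt_char q a \<chi>)) / Re (virt_char q a \<chi> \<one>\<^bsub>G\<^esub>) =
       (\<Sum>i<q. a i / (Re (\<chi> i \<one>\<^bsub>G\<^esub>))\<^sup>2 * Re (\<chi> i g)) / (\<Sum>i<q. a i * Re (\<chi> i \<one>\<^bsub>G\<^esub>))"
      using ineq part1 phi1 by (simp add: S_def)
    have S1: "S \<one>\<^bsub>G\<^esub> = (\<Sum>i<q. a i / Re (\<chi> i \<one>\<^bsub>G\<^esub>))"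
      unfolding S_def using Rechi1 Npos by (intro sum.cong refl) (simp add: power2_eq_square)
    have B: "comm_prob G \<one>\<^bsub>G\<^esub> \<le> (\<Sum>i<q. a i / Re (\<chi> i \<one>\<^bsub>G\<^esub>)) / (\<Sum>i<q. a i * Re (\<chi> i \<one>\<^bsub>G\<^esub>))"
      using ineq[OF one_closed] part1[OF one_closed] S1 phi1 by simp
    show "(\<forall>g\<in>carrier G.
       comm_prob G g \<le> expect_GG G (xi G g (virt_char q a \<chi>)) / Re (virt_char q a \<chi> \<one>\<^bsub>G\<^esub>) \<and>
       expect_GG G (xi G g (virt_char q a \<chi>)) / Re (virt_char q a \<chi> \<one>\<^bsub>G\<^esub>) =
       (\<Sum>i<q. a i / (Re (\<chi> i \<one>\<^bsub>G\<^esub>))\<^sup>2 * Re (\<chi> i g)) / (\<Sum>i<q. a i * Re (\<chi> i \<one>\<^bsub>G\<^esub>))) \<and> comm_prob G \<one>\<^bsub>G\<^esub> \<le> (\<Sum>i<q. a i / Re (\<chi> i \<one>\<^bsub>G\<^esub>)) / (\<Sum>i<q. a i * Re (\<chi> i \<one>\<^bsub>G\<^esub>))" using A B by blast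
  qed
qed

end
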